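(* If a collective choice problem $\mathcal C$ is a Distribution Problem, then it is $\mathcal D$-Manipulable for every veto-proof voting rule $\mathcal D$.
   Context: Collective choice problem $\mathcal C=(X,\{\succsim_i\}_{i\in N\cup\{A\}})$: voters $N=\{1,\dots,n\}$ and an agenda setter $A$, a compact metrizable policy space $X$, and continuous preferences $\succsim_i$ represented by continuous utilities $u_i$. $X_A^*=\arg\max_X u_A$. $\mathcal C$ is a Distribution Problem if for every $x\in X$ and every player $i\in N\cup\{A\}$: (Scarcity) if $u_i(x)<\max_{z\in X}u_i(z)$ then either some player $j\ne i$ has $u_j(x)>\min_{z\in X}u_j(z)$ or some policy $y$ has $u_k(y)>u_k(x)$ for all players $k$; (Transferability) if $u_i(x)>\min_{z\in X}u_i(z)$ then some policy $y$ has $u_j(y)>u_j(x)$ for all players $j\ne i$. A voting rule is a collection $\mathcal D\subseteq 2^N$ of winning coalitions; it is veto-proof if for every voter $i$ some $D\in\mathcal D$ satisfies $D\subseteq N\setminus\{i\}$. $\mathcal C$ is $\mathcal D$-Manipulable if for every $x\notin X_A^*$ there exist a policy $y$ and $D\in\mathcal D$ with $y\succ_A x$ and $y\succ_i x$ for every $i\in D$. *)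

theory Defs
  imports "HOL-Analysis.Analysis"
begin

text \<open>Players are of type 'v option: Some i is voter i (i in N), None is the
agenda setter A. A utility profile u assigns each player a utility on policies.\<close>

definition players :: "'v set \<Rightarrow> 'v option set" where
  "players N = insert None (Some ` N)"

definition collective_choice_problem ::
  "'v set \<Rightarrow> ('x::metric_space) set \<Rightarrow> ('v option \<Rightarrow> 'x \<Rightarrow> real) \<Rightarrow> bool" where
  "collective_choice_problem N X u \<longleftrightarrow>
     finite N \<and> N \<noteq> {} \<and> compact X \<and> (\<forall>i\<in>players N. continuous_on X (u i))"

definition setter_optima :: "'x set \<Rightarrow> ('v option \<Rightarrow> 'x \<Rightarrow> real) \<Rightarrow> 'x set" where
  "setter_optima X u = {x \<in> X. \<forall>z\<in>X. u None z \<le> u None x}"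

definition distribution_problem ::
  "'v set \<Rightarrow> 'x set \<Rightarrow> ('v option \<Rightarrow> 'x \<Rightarrow> real) \<Rightarrow> bool" where
  "distribution_problem N X u \<longleftrightarrow>
     (\<forall>x\<in>X. \<forall>i\<in>players N.
        (u i x < (SUP z\<in>X. u i z) \<longrightarrow>
           (\<exists>j\<in>players N. j \<noteq> i \<and> u j x > (INF z\<in>X. u j z)) \<or>
           (\<exists>y\<in>X. \<forall>k\<in>players N. u k y > u k x)) \<and>
        (u i x > (INF z\<in>X. u i z) \<longrightarrow>
           (\<exists>y\<in>X. \<forall>j\<in>players N. j \<noteq> i \<longrightarrow> u j y > u j x)))"

definition veto_proof :: "'v set \<Rightarrow> 'v set set \<Rightarrow> bool" where
  "veto_proof N \<D> \<longleftrightarrow> (\<forall>i\<in>N. \<exists>D\<in>\<D>. D \<subseteq> N - {i})"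

definition manipulable ::
  "'v set \<Rightarrow> 'x set \<Rightarrow> ('v option \<Rightarrow> 'x \<Rightarrow> real) \<Rightarrow> 'v set set \<Rightarrow> bool" where
  "manipulable N X u \<D> \<longleftrightarrow>
     (\<forall>x\<in>X. x \<notin> setter_optima X u \<longrightarrow>
        (\<exists>y\<in>X. \<exists>D\<in>\<D>. u None y > u None x \<and> (\<forall>i\<in>D. u (Some i) y > u (Some i) x)))"

end

theory Submission
  imports Defs
begin

theorem theorem5:
  fixes N :: "'v set" and X :: "('x::metric_space) set"
    and u :: "'v option \<Rightarrow> 'x \<Rightarrow> real"
  assumes "collective_choice_problem N X u"
    and "distribution_problem N X u"
  shows "\<forall>\<D>. \<D> \<subseteq> Pow N \<and> veto_proof N \<D> \<longrightarrow> manipulable N X u \<D>"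
proof (intro allI impI)
  fix \<D> assume HD: "\<D> \<subseteq> Pow N \<and> veto_proof N \<D>"
  have fin: "N \<noteq> {}" and cpt: "compact X" and cont: "continuous_on X (u None)"
    using assms(1) unfolding collective_choice_problem_def players_def by auto
  have bdd: "bdd_above (u None ` X)"
    by (meson bounded_imp_bdd_above compact_continuous_image compact_imp_bounded cont cpt)
  obtain v0 where v0: "v0 \<in> N" using fin by auto
  obtain D0 where D0: "D0 \<in> \<D>" using HD v0 unfolding veto_proof_def by blast
  show "manipulable N X u \<D>"
    unfolding manipulable_def
  proof (intro ballI impI)
    fix x assume xX: "x \<in> X" and xn: "x \<notin> setter_optima X u"
    then obtain z where zX: "z \<in> X" and zx: "u None z > u None x"
      unfolding setter_optima_def by force
    have "u None z \<le> (SUP z\<in>X. u None z)" using bdd zX by (simp add: cSUP_upper)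
    with zx have lt: "u None x < (SUP z\<in>X. u None z)" by simp
    have Np: "None \<in> players N" unfolding players_def by simp
    from assms(2) xX Np lt have
      "(\<exists>j\<in>players N. j \<noteq> None \<and> u j x > (INF z\<in>X. u j z)) \<or>
           (\<exists>y\<in>X. \<forall>k\<in>players N. u k y > u k x)"
      unfolding distribution_problem_def by blast
    then show "\<exists>y\<in>X. \<exists>D\<in>\<D>. u None y > u None x \<and> (\<forall>i\<in>D. u (Some i) y > u (Some i) x)"
    proof
      assume "\<exists>j\<in>players N. j \<noteq> None \<and> u j x > (INF z\<in>X. u j z)"
      then obtain v where vN: "v \<in> N" and vi: "u (Some v) x > (INF z\<in>X. u (Some v) z)"
        unfolding players_def by auto
      have "Some v \<in> players N" using vN unfolding players_def by simp
      with assms(2) xX vi obtain y where yX: "y \<in> X"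
        and y: "\<forall>j\<in>players N. j \<noteq> Some v \<longrightarrow> u j y > u j x"
        unfolding distribution_problem_def by blast
      obtain D where D: "D \<in> \<D>" "D \<subseteq> N - {v}" using HD vN unfolding veto_proof_def by blast
      have "u None y > u None x" using y Np by simp
      moreover have "\<forall>i\<in>D. u (Some i) y > u (Some i) x"
        using y D unfolding players_def by auto
      ultimately show ?thesis using yX D by blast
    next
      assume "\<exists>y\<in>X. \<forall>k\<in>players N. u k y > u k x"
      then obtain y where yX: "y \<in> X" and y: "\<forall>k\<in>players N. u k y > u k x" by blast
      have "D0 \<subseteq> N" using HD D0 by auto
      then have "\<forall>i\<in>D0. u (Some i) y > u (Some i) x" using y unfolding players_def by auto
      then show ?thesis using yX D0 y Np by blast
    qed
  qed
qed

end
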